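(* For every constant $B>0$, any number of training samples $n\ge1$ and any time $t\ge1$, with probability at least $1-\frac1{c_1}$ over the random initialization, the empirical Rademacher complexity satisfies $$\frac1n\mathbb{E}_{\xi\in\{\pm1\}^n}\Big[\sup_{\max_{r\in[m]}\|w_{i,r}^{(t)}\|_2,\,|b_{i,r}^{(t)}|\le B}\ \sum_{j=1}^n\xi_jN\big((x_{1:i})_j;\theta^{(t)}_i\big)\Big]\le\frac{8c_1\epsilon_aBm\sqrt{2\log m}}{\sqrt n},$$ where $(x_{1:i})_j$ denotes the first $i$ coordinates of the $j$-th training example.
   Context: Fix $m\ge2$, $\epsilon_a>0$, a constant $c_1>10$, $i\in[d]$, and training points $x^{(1)},\dots,x^{(n)}\in\mathbb{R}^d$ with $\|x^{(j)}\|_2\le1$. For $\|x_{1:i}\|_2\le1$, $\hat x_{1:i}=(x_1,\dots,x_i,\sqrt{1-\|x_{1:i}\|_2^2})$. Random frozen initial parameters $a_{i,r}\sim\mathcal N(0,\epsilon_a^2)$, $\bar w_{i,r}\sim\mathcal N(0,\frac1mI_{i+1})$, $\bar b_{i,r}\sim\mathcal N(0,\frac1m)$, independent. $N(x_{1:i};\theta_i)=\sum_{r=1}^ma_{i,r}\max\{0,\langle\bar w_{i,r}+w_{i,r},\hat x_{1:i}\rangle+\bar b_{i,r}+b_{i,r}\}$ with offsets $\theta_i=(w_{i,r},b_{i,r})_r$; the supremum is over all offsets $\theta_i^{(t)}=(w^{(t)}_{i,r},b^{(t)}_{i,r})_r$ satisfying the stated bounds. $\xi$ is uniform on $\{\pm1\}^n$.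 *)

theory Defs
  imports "HOL-Probability.Probability"
begin

(* All indices are 1-based: neurons r in {1..m}, input coordinates k in {1..d},
   training points j in {1..n}, augmented input coordinates k in {1..i+1}. *)

definition xhat :: "nat \<Rightarrow> (nat \<Rightarrow> real) \<Rightarrow> nat \<Rightarrow> real" where
  "xhat i x k = (if k \<le> i then x k else sqrt (1 - (\<Sum>l=1..i. (x l)\<^sup>2)))"

text \<open>Network N(x_{1:i}; theta_i) with frozen init (a, wbar, bbar) and offsets (w, b).\<close>
definition netN :: "nat \<Rightarrow> nat \<Rightarrow> (nat \<Rightarrow> real) \<Rightarrow> (nat \<Rightarrow> nat \<Rightarrow> real) \<Rightarrow> (nat \<Rightarrow> real)
   \<Rightarrow> (nat \<Rightarrow> nat \<Rightarrow> real) \<Rightarrow> (nat \<Rightarrow> real) \<Rightarrow> (nat \<Rightarrow> real) \<Rightarrow> real" where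
  "netN m i a wbar bbar w b x =
     (\<Sum>r=1..m. a r * max 0 ((\<Sum>k=1..i+1. (wbar r k + w r k) * xhat i x k) + bbar r + b r))"

definition offsets :: "nat \<Rightarrow> nat \<Rightarrow> real \<Rightarrow> ((nat \<Rightarrow> nat \<Rightarrow> real) \<times> (nat \<Rightarrow> real)) set" where
  "offsets m i B = {(w, b). \<forall>r\<in>{1..m}. sqrt (\<Sum>k=1..i+1. (w r k)\<^sup>2) \<le> B \<and> \<bar>b r\<bar> \<le> B}"

definition rademacher :: "nat \<Rightarrow> nat \<Rightarrow> nat \<Rightarrow> (nat \<Rightarrow> nat \<Rightarrow> real) \<Rightarrow> real
   \<Rightarrow> (nat \<Rightarrow> real) \<Rightarrow> (nat \<Rightarrow> nat \<Rightarrow> real) \<Rightarrow> (nat \<Rightarrow> real) \<Rightarrow> real" where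
  "rademacher m i n x B a wbar bbar =
     (1 / real n) * ((\<Sum>\<xi>\<in>PiE {1..n} (\<lambda>_. {-1, 1::real}).
        Sup ((\<lambda>(w, b). \<Sum>j=1..n. \<xi> j * netN m i a wbar bbar w b (x j)) ` offsets m i B))
      / 2 ^ n)"

text \<open>Law of the random initialization: a_r ~ N(0, eps^2), wbar_r ~ N(0, I_{i+1}/m),
  bbar_r ~ N(0, 1/m), all independent (normal_density takes the standard deviation).\<close>
definition init_measure :: "nat \<Rightarrow> nat \<Rightarrow> real
   \<Rightarrow> ((nat \<Rightarrow> real) \<times> (nat \<Rightarrow> nat \<Rightarrow> real) \<times> (nat \<Rightarrow> real)) measure" where
  "init_measure m i eps =
     (PiM {1..m} (\<lambda>_. density lborel (normal_density 0 eps)))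
     \<Otimes>\<^sub>M ((PiM {1..m} (\<lambda>_. PiM {1..i+1} (\<lambda>_. density lborel (normal_density 0 (1 / sqrt m)))))
     \<Otimes>\<^sub>M (PiM {1..m} (\<lambda>_. density lborel (normal_density 0 (1 / sqrt m)))))"

end

theory Submission
  imports Defs
begin


lemma markov_part:
  assumes eps: "eps > 0" and K: "K > 0" and m1: "m \<ge> 1"
  shows "measure (init_measure m i eps) {\<omega> \<in> space (init_measure m i eps). (\<Sum>r=1..m. \<bar>fst \<omega> r\<bar>) \<le> K}
     \<ge> 1 - real m * eps / K"
proof -
  define N where "N = density lborel (normal_density 0 eps)"
  define M1 where "M1 = PiM {1..m} (\<lambda>_. N)"
  define M23 where "M23 = ((PiM {1..m} (\<lambda>_. PiM {1..i+1} (\<lambda>_. density lborel (normal_density 0 (1 / sqrt m)))))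
     \<Otimes>\<^sub>M (PiM {1..m} (\<lambda>_. density lborel (normal_density 0 (1 / sqrt m)))))"
  have M: "init_measure m i eps = M1 \<Otimes>\<^sub>M M23" unfolding init_measure_def M1_def M23_def N_def by (rule refl)
  have pN: "prob_space N" unfolding N_def using eps by (rule prob_space_normal_density)
  have p1: "prob_space M1" unfolding M1_def using pN by (intro prob_space_PiM) auto
  have p23: "prob_space M23" unfolding M23_def
    using m1 by (intro prob_space_pair prob_space_PiM prob_space_normal_density) auto
  have pM: "prob_space (M1 \<Otimes>\<^sub>M M23)" using p1 p23 by (rule prob_space_pair)
  have d1: "distr (M1 \<Otimes>\<^sub>M M23) M1 fst = M1" using p23 by (rule prob_space.distr_pair_fst)
  have dr: "distr (M1 \<Otimes>\<^sub>M M23) N (\<lambda>\<omega>. fst \<omega> r) = N" if r: "r \<in> {1..m}" for r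
  proof -
    have "distr (M1 \<Otimes>\<^sub>M M23) N (\<lambda>\<omega>. fst \<omega> r) = distr (distr (M1 \<Otimes>\<^sub>M M23) M1 fst) N (\<lambda>a. a r)"
      using r by (subst distr_distr) (auto simp: M1_def comp_def intro!: measurable_component_singleton)
    also have "\<dots> = N" unfolding d1 unfolding M1_def using r pN by (intro distr_PiM_component) auto
    finally show ?thesis .
  qed
  have meas_r: "(\<lambda>\<omega>. fst \<omega> r) \<in> measurable (M1 \<Otimes>\<^sub>M M23) N" if r: "r \<in> {1..m}" for r
    using r unfolding M1_def by measurable
  have intN: "integrable N abs" unfolding N_def
    apply (subst integrable_density) apply auto
    using integrable_normal_moment_abs[of eps 0 1] eps by simp
  have intNv: "integral\<^sup>L N abs = eps * sqrt (2 / pi)" unfolding N_def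
    apply (subst integral_density) apply auto
    using integral_normal_moment_abs_odd[of eps 0 0] eps by simp
  have intr: "integrable (M1 \<Otimes>\<^sub>M M23) (\<lambda>\<omega>. \<bar>fst \<omega> r\<bar>)" if r: "r \<in> {1..m}" for r
    using integrable_distr_eq[OF meas_r[OF r], of abs] intN dr[OF r] by simp
  have absm: "(abs :: real \<Rightarrow> real) \<in> borel_measurable N" unfolding N_def by simp
  have intrv: "integral\<^sup>L (M1 \<Otimes>\<^sub>M M23) (\<lambda>\<omega>. \<bar>fst \<omega> r\<bar>) = eps * sqrt (2 / pi)" if r: "r \<in> {1..m}" for r
    using integral_distr[OF meas_r[OF r] absm] intNv dr[OF r] by simp
  define u where "u = (\<lambda>\<omega>::(nat \<Rightarrow> real) \<times> (nat \<Rightarrow> nat \<Rightarrow> real) \<times> (nat \<Rightarrow> real). (\<Sum>r=1..m. \<bar>fst \<omega> r\<bar>))"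
  have intu: "integrable (M1 \<Otimes>\<^sub>M M23) u" unfolding u_def using intr by auto
  have intuv: "integral\<^sup>L (M1 \<Otimes>\<^sub>M M23) u = real m * (eps * sqrt (2 / pi))"
    proof -
    have "integral\<^sup>L (M1 \<Otimes>\<^sub>M M23) u = (\<Sum>r=1..m. integral\<^sup>L (M1 \<Otimes>\<^sub>M M23) (\<lambda>\<omega>. \<bar>fst \<omega> r\<bar>))"
      unfolding u_def using Bochner_Integration.integral_sum[where I="{1..m}" and M="M1 \<Otimes>\<^sub>M M23" and f="\<lambda>r \<omega>. \<bar>fst \<omega> r\<bar>"] intr by blast
    also have "\<dots> = (\<Sum>r=1..m. eps * sqrt (2 / pi))" using intrv by (intro sum.cong) auto
    finally show ?thesis by simp
  qed
  have sq: "sqrt (2 / pi) \<le> 1" using pi_gt3 by simp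
  have mk: "measure (M1 \<Otimes>\<^sub>M M23) {x\<in>space (M1 \<Otimes>\<^sub>M M23). u x \<ge> K} \<le> real m * (eps * sqrt (2 / pi)) / K"
    using integral_Markov_inequality_measure[OF intu _ _ K] intuv by (auto simp: u_def)
  also have "\<dots> \<le> real m * eps / K"
    using sq eps K by (intro divide_right_mono) (auto intro!: mult_left_mono)
  finally have mk2: "measure (M1 \<Otimes>\<^sub>M M23) {x\<in>space (M1 \<Otimes>\<^sub>M M23). u x \<ge> K} \<le> real m * eps / K" .
  have umeas: "u \<in> borel_measurable (M1 \<Otimes>\<^sub>M M23)" using intu by auto
  have "{x\<in>space (M1 \<Otimes>\<^sub>M M23). u x \<le> K} \<supseteq> space (M1 \<Otimes>\<^sub>M M23) - {x\<in>space (M1 \<Otimes>\<^sub>M M23). u x \<ge> K}"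
    by auto
  then have "measure (M1 \<Otimes>\<^sub>M M23) {x\<in>space (M1 \<Otimes>\<^sub>M M23). u x \<le> K} \<ge>
      measure (M1 \<Otimes>\<^sub>M M23) (space (M1 \<Otimes>\<^sub>M M23) - {x\<in>space (M1 \<Otimes>\<^sub>M M23). u x \<ge> K})"
    using pM umeas by (intro finite_measure.finite_measure_mono prob_space.axioms(1)) auto
  moreover have "measure (M1 \<Otimes>\<^sub>M M23) (space (M1 \<Otimes>\<^sub>M M23) - {x\<in>space (M1 \<Otimes>\<^sub>M M23). u x \<ge> K})
     = 1 - measure (M1 \<Otimes>\<^sub>M M23) {x\<in>space (M1 \<Otimes>\<^sub>M M23). u x \<ge> K}"
    using pM umeas by (subst prob_space.prob_compl) auto
  ultimately show ?thesis using mk2 unfolding M u_def by linarith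
qed



lemma sum_PiE_insert:
  assumes "finite J" "a \<notin> J"
  shows "(\<Sum>\<xi>\<in>PiE (insert a J) (\<lambda>_. S). F \<xi>) = (\<Sum>\<xi>\<in>PiE J (\<lambda>_. S). \<Sum>s\<in>S. F (\<xi>(a:=s)))"
proof -
  have inj: "inj_on (\<lambda>(y, g). g(a := y)) (S \<times> PiE J (\<lambda>_. S))"
  proof (rule inj_onI, clarsimp)
    fix y g y' g'
    assume g: "g \<in> PiE J (\<lambda>_. S)" and g': "g' \<in> PiE J (\<lambda>_. S)" and e: "g(a := y) = g'(a := y')"
    have "y = y'" using fun_cong[OF e, of a] by simp
    moreover have "g = g'"
    proof
      fix j show "g j = g' j"
      proof (cases "j = a")
        case True then show ?thesis using g g' assms(2) by (auto simp: PiE_def extensional_def)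
      next
        case False then show ?thesis using fun_cong[OF e, of j] by simp
      qed
    qed
    ultimately show "y = y' \<and> g = g'" by simp
  qed
  have "(\<Sum>\<xi>\<in>PiE (insert a J) (\<lambda>_. S). F \<xi>) = (\<Sum>p\<in>S \<times> PiE J (\<lambda>_. S). F ((\<lambda>(y, g). g(a := y)) p))"
    unfolding PiE_insert_eq by (subst sum.reindex[OF inj]) (simp add: comp_def)
  also have "\<dots> = (\<Sum>s\<in>S. \<Sum>\<xi>\<in>PiE J (\<lambda>_. S). F (\<xi>(a:=s)))"
    by (subst sum.cartesian_product) (simp add: case_prod_beta)
  also have "\<dots> = (\<Sum>\<xi>\<in>PiE J (\<lambda>_. S). \<Sum>s\<in>S. F (\<xi>(a:=s)))"
    by (rule sum.swap)
  finally show ?thesis .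
qed

lemma second_moment:
  fixes v :: "nat \<Rightarrow> nat \<Rightarrow> real"
  assumes "finite J"
  shows "(\<Sum>\<xi>\<in>PiE J (\<lambda>_. {-1,1::real}). \<Sum>k\<in>K. (\<Sum>j\<in>J. \<xi> j * v j k)\<^sup>2)
       = 2 ^ card J * (\<Sum>k\<in>K. \<Sum>j\<in>J. (v j k)\<^sup>2)"
  using assms
proof (induction J rule: finite_induct)
  case empty
  then show ?case by simp
next
  case (insert a J)
  have e: "(\<Sum>j\<in>insert a J. (\<xi>(a:=s)) j * v j k) = s * v a k + (\<Sum>j\<in>J. \<xi> j * v j k)" for \<xi> s k
  proof -
    have "(\<Sum>j\<in>J. (\<xi>(a:=s)) j * v j k) = (\<Sum>j\<in>J. \<xi> j * v j k)"
      using insert(2) by (intro sum.cong) auto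
    then show ?thesis using insert(1,2) by simp
  qed
  have "(\<Sum>\<xi>\<in>PiE (insert a J) (\<lambda>_. {-1,1::real}). \<Sum>k\<in>K. (\<Sum>j\<in>insert a J. \<xi> j * v j k)\<^sup>2)
      = (\<Sum>\<xi>\<in>PiE J (\<lambda>_. {-1,1::real}). \<Sum>s\<in>{-1,1}. \<Sum>k\<in>K. (s * v a k + (\<Sum>j\<in>J. \<xi> j * v j k))\<^sup>2)"
    by (subst sum_PiE_insert[OF insert(1,2)]) (simp only: e)
  also have "\<dots> = (\<Sum>\<xi>\<in>PiE J (\<lambda>_. {-1,1::real}). \<Sum>k\<in>K. 2 * (v a k)\<^sup>2 + 2 * (\<Sum>j\<in>J. \<xi> j * v j k)\<^sup>2)"
    by (intro sum.cong refl) (simp add: sum.distrib[symmetric] power2_eq_square algebra_simps)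
  also have "\<dots> = (\<Sum>\<xi>\<in>PiE J (\<lambda>_. {-1,1::real}). 2 * (\<Sum>k\<in>K. (v a k)\<^sup>2)) + 2 * (\<Sum>\<xi>\<in>PiE J (\<lambda>_. {-1,1::real}). \<Sum>k\<in>K. (\<Sum>j\<in>J. \<xi> j * v j k)\<^sup>2)"
    by (simp add: sum.distrib sum_distrib_left)
  also have "\<dots> = 2 ^ card J * 2 * (\<Sum>k\<in>K. (v a k)\<^sup>2) + 2 * (2 ^ card J * (\<Sum>k\<in>K. \<Sum>j\<in>J. (v j k)\<^sup>2))"
    using insert(1) by (simp add: insert.IH card_PiE)
  also have "\<dots> = 2 ^ card (insert a J) * (\<Sum>k\<in>K. \<Sum>j\<in>insert a J. (v j k)\<^sup>2)"
    using insert(1,2) by (simp add: sum.distrib algebra_simps)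
  finally show ?case .
qed

lemma sum_sqrt_le:
  fixes Y :: "'a \<Rightarrow> real"
  assumes "finite X" "\<And>x. x \<in> X \<Longrightarrow> Y x \<ge> 0"
  shows "(\<Sum>x\<in>X. sqrt (Y x)) \<le> sqrt (real (card X) * (\<Sum>x\<in>X. Y x))"
proof -
  have "(\<Sum>x\<in>X. \<bar>1::real\<bar> * \<bar>sqrt (Y x)\<bar>) \<le> L2_set (\<lambda>_. 1::real) X * L2_set (\<lambda>x. sqrt (Y x)) X"
    by (rule L2_set_mult_ineq)
  moreover have "L2_set (\<lambda>_. 1::real) X = sqrt (real (card X))" by (simp add: L2_set_def)
  moreover have "L2_set (\<lambda>x. sqrt (Y x)) X = sqrt (\<Sum>x\<in>X. Y x)"
    unfolding L2_set_def using assms by (intro arg_cong[where f=sqrt] sum.cong) auto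
  ultimately show ?thesis using assms by (simp add: real_sqrt_mult)
qed

lemma one_step:
  fixes R t :: "'t \<Rightarrow> real" and \<phi> :: "real \<Rightarrow> real"
  assumes T: "T \<noteq> {}" and bR: "\<And>\<theta>. \<theta> \<in> T \<Longrightarrow> \<bar>R \<theta>\<bar> \<le> K" and bt: "\<And>\<theta>. \<theta> \<in> T \<Longrightarrow> \<bar>t \<theta>\<bar> \<le> M"
    and lip: "\<And>x y. \<bar>\<phi> x - \<phi> y\<bar> \<le> \<bar>x - y\<bar>"
  shows "Sup ((\<lambda>\<theta>. R \<theta> + \<phi> (t \<theta>)) ` T) + Sup ((\<lambda>\<theta>. R \<theta> - \<phi> (t \<theta>)) ` T)
     \<le> Sup ((\<lambda>\<theta>. R \<theta> + t \<theta>) ` T) + Sup ((\<lambda>\<theta>. R \<theta> - t \<theta>) ` T)"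
proof -
  define S1 where "S1 = Sup ((\<lambda>\<theta>. R \<theta> + t \<theta>) ` T)"
  define S2 where "S2 = Sup ((\<lambda>\<theta>. R \<theta> - t \<theta>) ` T)"
  have b1: "bdd_above ((\<lambda>\<theta>. R \<theta> + t \<theta>) ` T)"
    by (rule bdd_aboveI2[where M="K + M"]) (use bR bt in force)
  have b2: "bdd_above ((\<lambda>\<theta>. R \<theta> - t \<theta>) ` T)"
    by (rule bdd_aboveI2[where M="K + M"]) (use bR bt in force)
  have u1: "R \<theta> + t \<theta> \<le> S1" if "\<theta> \<in> T" for \<theta>
    unfolding S1_def using b1 that by (intro cSUP_upper)
  have u2: "R \<theta> - t \<theta> \<le> S2" if "\<theta> \<in> T" for \<theta>
    unfolding S2_def using b2 that by (intro cSUP_upper)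
  have key: "(R \<theta> + \<phi> (t \<theta>)) + (R \<theta>' - \<phi> (t \<theta>')) \<le> S1 + S2" if "\<theta> \<in> T" "\<theta>' \<in> T" for \<theta> \<theta>'
  proof -
    have "\<phi> (t \<theta>) - \<phi> (t \<theta>') \<le> \<bar>t \<theta> - t \<theta>'\<bar>" using lip[of "t \<theta>" "t \<theta>'"] by linarith
    moreover have "R \<theta> + t \<theta> + (R \<theta>' - t \<theta>') \<le> S1 + S2" using u1 u2 that by (meson add_mono)
    moreover have "R \<theta>' + t \<theta>' + (R \<theta> - t \<theta>) \<le> S1 + S2" using u1 u2 that by (meson add_mono)
    ultimately show ?thesis by (cases "t \<theta> \<ge> t \<theta>'") (auto simp: abs_if)
  qed
  have "R \<theta>' - \<phi> (t \<theta>') \<le> S1 + S2 - Sup ((\<lambda>\<theta>. R \<theta> + \<phi> (t \<theta>)) ` T)" if "\<theta>' \<in> T" for \<theta>'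
  proof -
    have "Sup ((\<lambda>\<theta>. R \<theta> + \<phi> (t \<theta>)) ` T) \<le> S1 + S2 - (R \<theta>' - \<phi> (t \<theta>'))"
      using T key[OF _ that] by (intro cSUP_least) (auto simp: algebra_simps)
    then show ?thesis by linarith
  qed
  then have "Sup ((\<lambda>\<theta>. R \<theta> - \<phi> (t \<theta>)) ` T) \<le> S1 + S2 - Sup ((\<lambda>\<theta>. R \<theta> + \<phi> (t \<theta>)) ` T)"
    using T by (intro cSUP_least) auto
  then show ?thesis unfolding S1_def S2_def by linarith
qed

lemma sum_ins_upd:
  assumes "finite J" "a \<notin> J"
  shows "(\<Sum>j\<in>insert a J. (\<xi>(a:=s)) j * f j) = s * f a + (\<Sum>j\<in>J. \<xi> j * f j)"
proof -
  have "(\<Sum>j\<in>J. (\<xi>(a:=s)) j * f j) = (\<Sum>j\<in>J. \<xi> j * f j)"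
    using assms(2) by (intro sum.cong) auto
  then show ?thesis using assms by simp
qed

lemma contraction_aux:
  fixes t :: "'t \<Rightarrow> nat \<Rightarrow> real" and \<phi> :: "nat \<Rightarrow> real \<Rightarrow> real"
  assumes "finite J"
  shows "T \<noteq> {} \<Longrightarrow> (\<And>\<theta> j. \<theta> \<in> T \<Longrightarrow> j \<in> J \<Longrightarrow> \<bar>t \<theta> j\<bar> \<le> M)
    \<Longrightarrow> (\<And>j x y. j \<in> J \<Longrightarrow> \<bar>\<phi> j x - \<phi> j y\<bar> \<le> \<bar>x - y\<bar>)
    \<Longrightarrow> (\<And>\<theta>. \<theta> \<in> T \<Longrightarrow> \<bar>g \<theta>\<bar> \<le> K)
    \<Longrightarrow> (\<Sum>\<xi>\<in>PiE J (\<lambda>_. {-1,1::real}). Sup ((\<lambda>\<theta>. g \<theta> + (\<Sum>j\<in>J. \<xi> j * \<phi> j (t \<theta> j))) ` T))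
     \<le> (\<Sum>\<xi>\<in>PiE J (\<lambda>_. {-1,1::real}). Sup ((\<lambda>\<theta>. g \<theta> + (\<Sum>j\<in>J. \<xi> j * t \<theta> j)) ` T))"
  using assms
proof (induction J arbitrary: g K rule: finite_induct)
  case empty
  then show ?case by simp
next
  case (insert a J)
  note T = insert.prems(1)
  have bt: "\<And>\<theta> j. \<theta> \<in> T \<Longrightarrow> j \<in> J \<Longrightarrow> \<bar>t \<theta> j\<bar> \<le> M" using insert.prems(2) by auto
  have bta: "\<And>\<theta>. \<theta> \<in> T \<Longrightarrow> \<bar>t \<theta> a\<bar> \<le> M" using insert.prems(2) by auto
  have lip: "\<And>j x y. j \<in> J \<Longrightarrow> \<bar>\<phi> j x - \<phi> j y\<bar> \<le> \<bar>x - y\<bar>" using insert.prems(3) by auto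
  have lipa: "\<And>x y. \<bar>\<phi> a x - \<phi> a y\<bar> \<le> \<bar>x - y\<bar>" using insert.prems(3) by auto
  note bg = insert.prems(4)
  define R where "R = (\<lambda>\<xi> \<theta>. g \<theta> + (\<Sum>j\<in>J. \<xi> j * \<phi> j (t \<theta> j)))"
  define KR where "KR = K + (\<Sum>j\<in>J. \<bar>\<phi> j 0\<bar> + M)"
  have bR: "\<bar>R \<xi> \<theta>\<bar> \<le> KR" if "\<xi> \<in> PiE J (\<lambda>_. {-1,1::real})" "\<theta> \<in> T" for \<xi> \<theta>
  proof -
    have "\<bar>\<xi> j * \<phi> j (t \<theta> j)\<bar> \<le> \<bar>\<phi> j 0\<bar> + M" if j: "j \<in> J" for j
    proof -
      have "\<bar>\<xi> j\<bar> = 1" using \<open>\<xi> \<in> _\<close> j by (auto simp: PiE_iff)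
      moreover have "\<bar>\<phi> j (t \<theta> j)\<bar> \<le> \<bar>\<phi> j 0\<bar> + M"
        using lip[OF j, of "t \<theta> j" 0] bt[OF \<open>\<theta> \<in> T\<close> j] by linarith
      ultimately show ?thesis by (simp add: abs_mult)
    qed
    note hj = this
    have "\<bar>\<Sum>j\<in>J. \<xi> j * \<phi> j (t \<theta> j)\<bar> \<le> (\<Sum>j\<in>J. \<bar>\<phi> j 0\<bar> + M)"
      by (rule order_trans[OF sum_abs sum_mono]) (rule hj)
    then show ?thesis unfolding R_def KR_def using bg[OF \<open>\<theta> \<in> T\<close>] by linarith
  qed
  have eqL: "(\<Sum>s\<in>{-1,1::real}. Sup ((\<lambda>\<theta>. g \<theta> + (\<Sum>j\<in>insert a J. (\<xi>(a:=s)) j * \<phi> j (t \<theta> j))) ` T))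
     = Sup ((\<lambda>\<theta>. R \<xi> \<theta> + \<phi> a (t \<theta> a)) ` T) + Sup ((\<lambda>\<theta>. R \<xi> \<theta> - \<phi> a (t \<theta> a)) ` T)" for \<xi>
    unfolding sum_ins_upd[OF insert(1,2)] R_def by (simp add: algebra_simps)
  have eqR: "(\<Sum>s\<in>{-1,1::real}. Sup ((\<lambda>\<theta>. g \<theta> + (\<Sum>j\<in>insert a J. (\<xi>(a:=s)) j * t \<theta> j)) ` T))
     = Sup ((\<lambda>\<theta>. (g \<theta> + t \<theta> a) + (\<Sum>j\<in>J. \<xi> j * t \<theta> j)) ` T) + Sup ((\<lambda>\<theta>. (g \<theta> - t \<theta> a) + (\<Sum>j\<in>J. \<xi> j * t \<theta> j)) ` T)" for \<xi>
    unfolding sum_ins_upd[OF insert(1,2)] by (simp add: algebra_simps)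
  have eqM: "Sup ((\<lambda>\<theta>. R \<xi> \<theta> + t \<theta> a) ` T) + Sup ((\<lambda>\<theta>. R \<xi> \<theta> - t \<theta> a) ` T)
     = Sup ((\<lambda>\<theta>. (g \<theta> + t \<theta> a) + (\<Sum>j\<in>J. \<xi> j * \<phi> j (t \<theta> j))) ` T) + Sup ((\<lambda>\<theta>. (g \<theta> - t \<theta> a) + (\<Sum>j\<in>J. \<xi> j * \<phi> j (t \<theta> j))) ` T)" for \<xi>
    unfolding R_def by (simp add: algebra_simps)
  have "(\<Sum>\<xi>\<in>PiE (insert a J) (\<lambda>_. {-1,1::real}). Sup ((\<lambda>\<theta>. g \<theta> + (\<Sum>j\<in>insert a J. \<xi> j * \<phi> j (t \<theta> j))) ` T))
     = (\<Sum>\<xi>\<in>PiE J (\<lambda>_. {-1,1::real}). Sup ((\<lambda>\<theta>. R \<xi> \<theta> + \<phi> a (t \<theta> a)) ` T) + Sup ((\<lambda>\<theta>. R \<xi> \<theta> - \<phi> a (t \<theta> a)) ` T))"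
    by (subst sum_PiE_insert[OF insert(1,2)]) (simp only: eqL)
  also have "\<dots> \<le> (\<Sum>\<xi>\<in>PiE J (\<lambda>_. {-1,1::real}). Sup ((\<lambda>\<theta>. R \<xi> \<theta> + t \<theta> a) ` T) + Sup ((\<lambda>\<theta>. R \<xi> \<theta> - t \<theta> a) ` T))"
    by (intro sum_mono one_step[OF T _ bta lipa]) (use bR in auto)
  also have "\<dots> = (\<Sum>\<xi>\<in>PiE J (\<lambda>_. {-1,1::real}). Sup ((\<lambda>\<theta>. (g \<theta> + t \<theta> a) + (\<Sum>j\<in>J. \<xi> j * \<phi> j (t \<theta> j))) ` T))
     + (\<Sum>\<xi>\<in>PiE J (\<lambda>_. {-1,1::real}). Sup ((\<lambda>\<theta>. (g \<theta> - t \<theta> a) + (\<Sum>j\<in>J. \<xi> j * \<phi> j (t \<theta> j))) ` T))"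
    by (simp only: eqM sum.distrib)
  also have "\<dots> \<le> (\<Sum>\<xi>\<in>PiE J (\<lambda>_. {-1,1::real}). Sup ((\<lambda>\<theta>. (g \<theta> + t \<theta> a) + (\<Sum>j\<in>J. \<xi> j * t \<theta> j)) ` T))
     + (\<Sum>\<xi>\<in>PiE J (\<lambda>_. {-1,1::real}). Sup ((\<lambda>\<theta>. (g \<theta> - t \<theta> a) + (\<Sum>j\<in>J. \<xi> j * t \<theta> j)) ` T))"
  proof (rule add_mono)
    show "(\<Sum>\<xi>\<in>PiE J (\<lambda>_. {-1,1::real}). Sup ((\<lambda>\<theta>. (g \<theta> + t \<theta> a) + (\<Sum>j\<in>J. \<xi> j * \<phi> j (t \<theta> j))) ` T))
       \<le> (\<Sum>\<xi>\<in>PiE J (\<lambda>_. {-1,1::real}). Sup ((\<lambda>\<theta>. (g \<theta> + t \<theta> a) + (\<Sum>j\<in>J. \<xi> j * t \<theta> j)) ` T))"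
      by (rule insert.IH[where K="K + M", OF T bt lip]) (use bg bta in \<open>force+\<close>)
    show "(\<Sum>\<xi>\<in>PiE J (\<lambda>_. {-1,1::real}). Sup ((\<lambda>\<theta>. (g \<theta> - t \<theta> a) + (\<Sum>j\<in>J. \<xi> j * \<phi> j (t \<theta> j))) ` T))
       \<le> (\<Sum>\<xi>\<in>PiE J (\<lambda>_. {-1,1::real}). Sup ((\<lambda>\<theta>. (g \<theta> - t \<theta> a) + (\<Sum>j\<in>J. \<xi> j * t \<theta> j)) ` T))"
      by (rule insert.IH[where K="K + M", OF T bt lip]) (use bg bta in \<open>force+\<close>)
  qed
  also have "\<dots> = (\<Sum>\<xi>\<in>PiE (insert a J) (\<lambda>_. {-1,1::real}). Sup ((\<lambda>\<theta>. g \<theta> + (\<Sum>j\<in>insert a J. \<xi> j * t \<theta> j)) ` T))"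
    by (subst sum_PiE_insert[OF insert(1,2)]) (simp only: eqR sum.distrib)
  finally show ?case .
qed



lemma contraction:
  fixes t :: "'t \<Rightarrow> nat \<Rightarrow> real" and \<phi> :: "nat \<Rightarrow> real \<Rightarrow> real"
  assumes "finite J" "T \<noteq> {}" "\<And>\<theta> j. \<theta> \<in> T \<Longrightarrow> j \<in> J \<Longrightarrow> \<bar>t \<theta> j\<bar> \<le> M"
    "\<And>j x y. j \<in> J \<Longrightarrow> \<bar>\<phi> j x - \<phi> j y\<bar> \<le> \<bar>x - y\<bar>"
  shows "(\<Sum>\<xi>\<in>PiE J (\<lambda>_. {-1,1::real}). Sup ((\<lambda>\<theta>. (\<Sum>j\<in>J. \<xi> j * \<phi> j (t \<theta> j))) ` T))
     \<le> (\<Sum>\<xi>\<in>PiE J (\<lambda>_. {-1,1::real}). Sup ((\<lambda>\<theta>. (\<Sum>j\<in>J. \<xi> j * t \<theta> j)) ` T))"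
  using contraction_aux[OF assms(1) assms(2), of t M \<phi> "\<lambda>_. 0" 0] assms(3,4) by simp

lemma cs_abs:
  fixes w v :: "nat \<Rightarrow> real"
  shows "\<bar>\<Sum>k\<in>K. w k * v k\<bar> \<le> sqrt (\<Sum>k\<in>K. (w k)\<^sup>2) * sqrt (\<Sum>k\<in>K. (v k)\<^sup>2)"
proof -
  have "\<bar>\<Sum>k\<in>K. w k * v k\<bar> \<le> (\<Sum>k\<in>K. \<bar>w k\<bar> * \<bar>v k\<bar>)"
    by (metis (no_types, lifting) abs_mult sum.cong sum_abs)
  also have "\<dots> \<le> L2_set w K * L2_set v K" by (rule L2_set_mult_ineq)
  finally show ?thesis by (simp add: L2_set_def)
qed

lemma relu_lip: "\<bar>max 0 (p::real) - max 0 q\<bar> \<le> \<bar>p - q\<bar>"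
  by (auto simp: max_def)

definition uu :: "nat \<Rightarrow> (nat \<Rightarrow> nat \<Rightarrow> real) \<Rightarrow> (nat \<Rightarrow> real) \<Rightarrow> nat \<Rightarrow> (nat \<Rightarrow> real) \<Rightarrow> real" where
  "uu i w b r y = (\<Sum>k=1..i+1. w r k * xhat i y k) + b r"

lemma netN_split:
  "netN m i a wbar bbar w b y = (\<Sum>r=1..m. a r * max 0 (uu i wbar bbar r y + uu i w b r y))"
  unfolding netN_def uu_def by (intro sum.cong refl) (simp add: sum.distrib algebra_simps)

lemma uu_bound:
  assumes "(w, b) \<in> offsets m i B" "r \<in> {1..m}" "(\<Sum>k=1..i+1. (xhat i y k)\<^sup>2) = 1"
  shows "\<bar>uu i w b r y\<bar> \<le> 2 * B"
proof -
  have "\<bar>\<Sum>k=1..i+1. w r k * xhat i y k\<bar> \<le> sqrt (\<Sum>k=1..i+1. (w r k)\<^sup>2) * sqrt (\<Sum>k=1..i+1. (xhat i y k)\<^sup>2)"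
    by (rule cs_abs)
  also have "\<dots> \<le> B" using assms unfolding offsets_def by auto
  finally have "\<bar>\<Sum>k=1..i+1. w r k * xhat i y k\<bar> \<le> B" .
  moreover have "\<bar>b r\<bar> \<le> B" using assms unfolding offsets_def by auto
  ultimately show ?thesis unfolding uu_def by linarith
qed

lemma xhat_norm:
  assumes "sqrt (\<Sum>k=1..d. (y k)\<^sup>2) \<le> 1" "i \<le> d"
  shows "(\<Sum>k=1..i+1. (xhat i y k)\<^sup>2) = 1"
proof -
  have "(\<Sum>k=1..d. (y k)\<^sup>2) \<le> 1" using assms(1) by (simp add: sqrt_le_D)
  moreover have "(\<Sum>k=1..i. (y k)\<^sup>2) \<le> (\<Sum>k=1..d. (y k)\<^sup>2)"
    using assms(2) by (intro sum_mono2) auto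
  ultimately have s: "(\<Sum>k=1..i. (y k)\<^sup>2) \<le> 1" by linarith
  have "(\<Sum>k=1..i+1. (xhat i y k)\<^sup>2) = (\<Sum>k=1..i. (xhat i y k)\<^sup>2) + (xhat i y (i+1))\<^sup>2"
    by simp
  also have "(\<Sum>k=1..i. (xhat i y k)\<^sup>2) = (\<Sum>k=1..i. (y k)\<^sup>2)"
    by (intro sum.cong) (auto simp: xhat_def)
  also have "(xhat i y (i+1))\<^sup>2 = 1 - (\<Sum>k=1..i. (y k)\<^sup>2)"
    using s by (simp add: xhat_def)
  finally show ?thesis by simp
qed

lemma sqrt_moment:
  fixes v :: "nat \<Rightarrow> nat \<Rightarrow> real"
  assumes "finite J" "finite K"
  shows "(\<Sum>\<xi>\<in>PiE J (\<lambda>_. {-1,1::real}). sqrt (\<Sum>k\<in>K. (\<Sum>j\<in>J. \<xi> j * v j k)\<^sup>2))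
       \<le> sqrt (2 ^ card J * (2 ^ card J * (\<Sum>k\<in>K. \<Sum>j\<in>J. (v j k)\<^sup>2)))"
proof -
  have c: "card (PiE J (\<lambda>_. {-1,1::real})) = 2 ^ card J"
    using assms(1) by (simp add: card_PiE numeral_2_eq_2)
  have "(\<Sum>\<xi>\<in>PiE J (\<lambda>_. {-1,1::real}). sqrt (\<Sum>k\<in>K. (\<Sum>j\<in>J. \<xi> j * v j k)\<^sup>2))
     \<le> sqrt (real (card (PiE J (\<lambda>_. {-1,1::real}))) * (\<Sum>\<xi>\<in>PiE J (\<lambda>_. {-1,1::real}). \<Sum>k\<in>K. (\<Sum>j\<in>J. \<xi> j * v j k)\<^sup>2))"
    using assms(1) by (intro sum_sqrt_le) (auto intro!: sum_nonneg finite_PiE)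
  also have "\<dots> = sqrt (2 ^ card J * (2 ^ card J * (\<Sum>k\<in>K. \<Sum>j\<in>J. (v j k)\<^sup>2)))"
    by (simp add: c second_moment[OF assms(1)])
  finally show ?thesis .
qed

lemma det_bound:
  assumes B: "B > 0" and n: "n \<ge> 1" and xn: "\<forall>j\<in>{1..n}. (\<Sum>k=1..i+1. (xhat i (x j) k)\<^sup>2) = 1"
  shows "rademacher m i n x B a wbar bbar \<le> 2 * B * (\<Sum>r=1..m. \<bar>a r\<bar>) / sqrt n"
proof -
  define T where "T = offsets m i B"
  define P where "P = PiE {1..n} (\<lambda>_. {-1,1::real})"
  have T0: "((\<lambda>_ _. 0::real), (\<lambda>_. 0::real)) \<in> T" using B by (auto simp: T_def offsets_def)
  hence Tne: "T \<noteq> {}" by auto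
  define sg where "sg r = (if a r \<ge> 0 then 1 else -1::real)" for r
  define \<phi> where "\<phi> r j s = sg r * max 0 (uu i wbar bbar r (x j) + s)" for r j s
  define U where "U r \<theta> j = uu i (fst \<theta>) (snd \<theta>) r (x j)" for r \<theta> j
  define G where "G r \<xi> \<theta> = (\<Sum>j=1..n. \<xi> j * \<phi> r j (U r \<theta> j))" for r \<xi> \<theta>
  define A where "A = (\<Sum>r=1..m. \<bar>a r\<bar>)"
  have hsplit: "(\<Sum>j=1..n. \<xi> j * netN m i a wbar bbar (fst \<theta>) (snd \<theta>) (x j)) = (\<Sum>r=1..m. \<bar>a r\<bar> * G r \<xi> \<theta>)" for \<xi> \<theta>
  proof -
    have "(\<Sum>j=1..n. \<xi> j * netN m i a wbar bbar (fst \<theta>) (snd \<theta>) (x j))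
       = (\<Sum>j=1..n. \<Sum>r=1..m. \<bar>a r\<bar> * (\<xi> j * \<phi> r j (U r \<theta> j)))"
      unfolding netN_split sum_distrib_left \<phi>_def U_def
      by (intro sum.cong refl) (auto simp: sg_def abs_if)
    also have "\<dots> = (\<Sum>r=1..m. \<bar>a r\<bar> * G r \<xi> \<theta>)"
      by (subst sum.swap) (simp add: G_def sum_distrib_left)
    finally show ?thesis .
  qed
  have Ub: "\<bar>U r \<theta> j\<bar> \<le> 2 * B" if "\<theta> \<in> T" "r \<in> {1..m}" "j \<in> {1..n}" for r \<theta> j
    unfolding U_def using that xn by (intro uu_bound) (auto simp: T_def)
  have lip: "\<bar>\<phi> r j p - \<phi> r j q\<bar> \<le> \<bar>p - q\<bar>" for r j p q
  proof -
    have "\<bar>\<phi> r j p - \<phi> r j q\<bar> = \<bar>max 0 (uu i wbar bbar r (x j) + p) - max 0 (uu i wbar bbar r (x j) + q)\<bar>"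
      unfolding \<phi>_def sg_def by (auto simp: abs_if algebra_simps)
    also have "\<dots> \<le> \<bar>p - q\<bar>" using relu_lip[of "uu i wbar bbar r (x j) + p" "uu i wbar bbar r (x j) + q"] by simp
    finally show ?thesis .
  qed
  define KG where "KG r = (\<Sum>j=1..n. \<bar>\<phi> r j 0\<bar> + 2 * B)" for r
  have Gb: "G r \<xi> \<theta> \<le> KG r" if "\<xi> \<in> P" "\<theta> \<in> T" "r \<in> {1..m}" for r \<xi> \<theta>
  proof -
    have "\<xi> j * \<phi> r j (U r \<theta> j) \<le> \<bar>\<phi> r j 0\<bar> + 2 * B" if j: "j \<in> {1..n}" for j
    proof -
      have "\<xi> j \<in> {-1,1}" using \<open>\<xi> \<in> P\<close> j unfolding P_def PiE_iff by blast
      then have "\<bar>\<xi> j\<bar> = 1" by auto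
      moreover have "\<bar>\<phi> r j (U r \<theta> j)\<bar> \<le> \<bar>\<phi> r j 0\<bar> + 2 * B"
        using lip[of r j "U r \<theta> j" 0] Ub[OF \<open>\<theta> \<in> T\<close> \<open>r \<in> _\<close> j] by linarith
      ultimately have "\<bar>\<xi> j * \<phi> r j (U r \<theta> j)\<bar> \<le> \<bar>\<phi> r j 0\<bar> + 2 * B" by (simp add: abs_mult)
      then show ?thesis by linarith
    qed
    then show ?thesis unfolding G_def KG_def by (rule sum_mono)
  qed
  have bddG: "bdd_above (G r \<xi> ` T)" if "\<xi> \<in> P" "r \<in> {1..m}" for r \<xi>
    using Gb that by (intro bdd_aboveI2[where M="KG r"]) auto
  have step1: "Sup ((\<lambda>\<theta>. \<Sum>r=1..m. \<bar>a r\<bar> * G r \<xi> \<theta>) ` T) \<le> (\<Sum>r=1..m. \<bar>a r\<bar> * Sup (G r \<xi> ` T))"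
    if "\<xi> \<in> P" for \<xi>
  proof (rule cSUP_least[OF Tne])
    fix \<theta> assume "\<theta> \<in> T"
    show "(\<Sum>r=1..m. \<bar>a r\<bar> * G r \<xi> \<theta>) \<le> (\<Sum>r=1..m. \<bar>a r\<bar> * Sup (G r \<xi> ` T))"
      using bddG[OF that] \<open>\<theta> \<in> T\<close> by (intro sum_mono mult_left_mono cSUP_upper) auto
  qed
  have radeq: "rademacher m i n x B a wbar bbar
      = 1 / real n * ((\<Sum>\<xi>\<in>P. Sup ((\<lambda>\<theta>. \<Sum>r=1..m. \<bar>a r\<bar> * G r \<xi> \<theta>) ` T)) / 2 ^ n)"
    unfolding rademacher_def P_def T_def case_prod_beta hsplit ..
  have step4: "(\<Sum>\<xi>\<in>P. Sup (G r \<xi> ` T)) \<le> (\<Sum>\<xi>\<in>P. Sup ((\<lambda>\<theta>. \<Sum>j=1..n. \<xi> j * U r \<theta> j) ` T))"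
    if r: "r \<in> {1..m}" for r
    unfolding G_def P_def
    by (rule contraction[where M="2 * B"]) (use Tne Ub r lip in auto)
  define V where "V \<xi> k = (\<Sum>j=1..n. \<xi> j * xhat i (x j) k)" for \<xi> k
  have step5: "Sup ((\<lambda>\<theta>. \<Sum>j=1..n. \<xi> j * U r \<theta> j) ` T)
      \<le> B * sqrt (\<Sum>k=1..i+1. (\<Sum>j=1..n. \<xi> j * xhat i (x j) k)\<^sup>2) + B * sqrt (\<Sum>k\<in>{0::nat}. (\<Sum>j=1..n. \<xi> j * 1)\<^sup>2)"
    if r: "r \<in> {1..m}" for r \<xi>
  proof (rule cSUP_least[OF Tne])
    fix \<theta> assume th: "\<theta> \<in> T"
    obtain w b where wb: "\<theta> = (w, b)" by fastforce
    have wB: "sqrt (\<Sum>k=1..i+1. (w r k)\<^sup>2) \<le> B" and bB: "\<bar>b r\<bar> \<le> B"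
    proof -
      have "\<forall>r\<in>{1..m}. sqrt (\<Sum>k=1..i+1. (w r k)\<^sup>2) \<le> B \<and> \<bar>b r\<bar> \<le> B"
        using th unfolding wb T_def offsets_def by blast
      then show "sqrt (\<Sum>k=1..i+1. (w r k)\<^sup>2) \<le> B" "\<bar>b r\<bar> \<le> B" using r by blast+
    qed
    have "(\<Sum>j=1..n. \<xi> j * U r \<theta> j) = (\<Sum>k=1..i+1. w r k * V \<xi> k) + b r * (\<Sum>j=1..n. \<xi> j)"
      unfolding U_def wb uu_def V_def
      by (simp add: algebra_simps sum_distrib_left sum.distrib sum_distrib_right, subst sum.swap, simp add: algebra_simps)
    also have "\<dots> \<le> \<bar>\<Sum>k=1..i+1. w r k * V \<xi> k\<bar> + \<bar>b r\<bar> * \<bar>\<Sum>j=1..n. \<xi> j\<bar>"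
    proof (rule add_mono)
      show "(\<Sum>k=1..i+1. w r k * V \<xi> k) \<le> \<bar>\<Sum>k=1..i+1. w r k * V \<xi> k\<bar>" by (rule abs_ge_self)
      show "b r * (\<Sum>j=1..n. \<xi> j) \<le> \<bar>b r\<bar> * \<bar>\<Sum>j=1..n. \<xi> j\<bar>"
        by (rule order_trans[OF abs_ge_self]) (simp only: abs_mult order_refl)
    qed
    also have "\<dots> \<le> sqrt (\<Sum>k=1..i+1. (w r k)\<^sup>2) * sqrt (\<Sum>k=1..i+1. (V \<xi> k)\<^sup>2) + B * \<bar>\<Sum>j=1..n. \<xi> j\<bar>"
      by (intro add_mono cs_abs mult_right_mono bB) auto
    also have "\<dots> \<le> B * sqrt (\<Sum>k=1..i+1. (V \<xi> k)\<^sup>2) + B * \<bar>\<Sum>j=1..n. \<xi> j\<bar>"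
      by (intro add_mono mult_right_mono wB real_sqrt_ge_zero sum_nonneg) auto
    finally show "(\<Sum>j=1..n. \<xi> j * U r \<theta> j) \<le> B * sqrt (\<Sum>k=1..i+1. (\<Sum>j=1..n. \<xi> j * xhat i (x j) k)\<^sup>2) + B * sqrt (\<Sum>k\<in>{0::nat}. (\<Sum>j=1..n. \<xi> j * 1)\<^sup>2)"
      by (simp add: V_def)
  qed
  have m1: "(\<Sum>\<xi>\<in>P. sqrt (\<Sum>k=1..i+1. (\<Sum>j=1..n. \<xi> j * xhat i (x j) k)\<^sup>2)) \<le> 2 ^ n * sqrt n"
  proof -
    have "(\<Sum>k=1..i+1. \<Sum>j=1..n. (xhat i (x j) k)\<^sup>2) = (\<Sum>j=1..n. \<Sum>k=1..i+1. (xhat i (x j) k)\<^sup>2)"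
      by (rule sum.swap)
    also have "\<dots> = n" using xn by simp
    finally have e: "(\<Sum>k=1..i+1. \<Sum>j=1..n. (xhat i (x j) k)\<^sup>2) = n" .
    have "(\<Sum>\<xi>\<in>P. sqrt (\<Sum>k=1..i+1. (\<Sum>j=1..n. \<xi> j * xhat i (x j) k)\<^sup>2)) \<le> sqrt (2 ^ n * (2 ^ n * n))"
      using sqrt_moment[of "{1..n}" "{1..i+1}" "\<lambda>j k. xhat i (x j) k"] unfolding P_def e by simp
    also have "\<dots> = 2 ^ n * sqrt n" by (simp add: real_sqrt_mult power_mult_distrib[symmetric] real_sqrt_power)
    finally show ?thesis .
  qed
  have m2: "(\<Sum>\<xi>\<in>P. sqrt (\<Sum>k\<in>{0::nat}. (\<Sum>j=1..n. \<xi> j * 1)\<^sup>2)) \<le> 2 ^ n * sqrt n"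
  proof -
    have "(\<Sum>\<xi>\<in>P. sqrt (\<Sum>k\<in>{0::nat}. (\<Sum>j=1..n. \<xi> j * 1)\<^sup>2)) \<le> sqrt (2 ^ n * (2 ^ n * n))"
      using sqrt_moment[of "{1..n}" "{0::nat}" "\<lambda>j k. 1"] unfolding P_def by simp
    also have "\<dots> = 2 ^ n * sqrt n" by (simp add: real_sqrt_mult power_mult_distrib[symmetric] real_sqrt_power)
    finally show ?thesis .
  qed
  have step6: "(\<Sum>\<xi>\<in>P. Sup (G r \<xi> ` T)) \<le> 2 * B * (2 ^ n * sqrt n)" if r: "r \<in> {1..m}" for r
  proof -
    have "(\<Sum>\<xi>\<in>P. Sup (G r \<xi> ` T)) \<le> (\<Sum>\<xi>\<in>P. B * sqrt (\<Sum>k=1..i+1. (\<Sum>j=1..n. \<xi> j * xhat i (x j) k)\<^sup>2) + B * sqrt (\<Sum>k\<in>{0::nat}. (\<Sum>j=1..n. \<xi> j * 1)\<^sup>2))"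
      by (rule order_trans[OF step4[OF r] sum_mono]) (rule step5[OF r])
    also have "\<dots> = B * (\<Sum>\<xi>\<in>P. sqrt (\<Sum>k=1..i+1. (\<Sum>j=1..n. \<xi> j * xhat i (x j) k)\<^sup>2)) + B * (\<Sum>\<xi>\<in>P. sqrt (\<Sum>k\<in>{0::nat}. (\<Sum>j=1..n. \<xi> j * 1)\<^sup>2))"
      by (simp add: sum.distrib sum_distrib_left)
    also have "\<dots> \<le> B * (2 ^ n * sqrt n) + B * (2 ^ n * sqrt n)"
      using B m1 m2 by (intro add_mono mult_left_mono) auto
    finally show ?thesis by (simp add: mult_ac)
  qed
  have "(\<Sum>\<xi>\<in>P. Sup ((\<lambda>\<theta>. \<Sum>r=1..m. \<bar>a r\<bar> * G r \<xi> \<theta>) ` T)) \<le> (\<Sum>\<xi>\<in>P. \<Sum>r=1..m. \<bar>a r\<bar> * Sup (G r \<xi> ` T))"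
    using step1 by (rule sum_mono)
  also have "\<dots> = (\<Sum>r=1..m. \<bar>a r\<bar> * (\<Sum>\<xi>\<in>P. Sup (G r \<xi> ` T)))"
    by (subst sum.swap) (simp add: sum_distrib_left)
  also have "\<dots> \<le> (\<Sum>r=1..m. \<bar>a r\<bar> * (2 * B * (2 ^ n * sqrt n)))"
    using step6 by (intro sum_mono mult_left_mono) auto
  also have "\<dots> = A * (2 * B * (2 ^ n * sqrt n))"
    by (simp add: A_def sum_distrib_right)
  also have "\<dots> = 2 ^ n * (2 * B * A * sqrt n)"
    by (simp add: algebra_simps)
  finally have fin: "(\<Sum>\<xi>\<in>P. Sup ((\<lambda>\<theta>. \<Sum>r=1..m. \<bar>a r\<bar> * G r \<xi> \<theta>) ` T)) \<le> 2 ^ n * (2 * B * A * sqrt n)" .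
  have "rademacher m i n x B a wbar bbar \<le> 1 / real n * (2 * B * A * sqrt n)"
    unfolding radeq using fin n by (intro mult_left_mono) (auto simp: divide_le_eq mult.commute)
  also have "\<dots> = 2 * B * A / sqrt n"
  proof -
    have "real n = sqrt n * sqrt n" by simp
    then show ?thesis using n by (simp add: field_simps)
  qed
  finally show ?thesis unfolding A_def .
qed



lemma comp_a[measurable]: "r \<in> {1..m} \<Longrightarrow> (\<lambda>\<omega>. fst \<omega> r) \<in> borel_measurable (init_measure m i eps)"
  unfolding init_measure_def by measurable

lemma comp_w[measurable]:
  assumes r: "r \<in> {1..m}" and k: "k \<in> {1..i+1}"
  shows "(\<lambda>\<omega>. fst (snd \<omega>) r k) \<in> borel_measurable (init_measure m i eps)"
proof -
  have 1: "(\<lambda>\<omega>. fst (snd \<omega>) r) \<in> measurable (init_measure m i eps) (PiM {1..i+1} (\<lambda>_. density lborel (normal_density 0 (1 / sqrt m))))"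
    unfolding init_measure_def using r by measurable
  have 2: "(\<lambda>f. f k) \<in> measurable (PiM {1..i+1} (\<lambda>_. density lborel (normal_density 0 (1 / sqrt m)))) (density lborel (normal_density 0 (1 / sqrt m)))"
    using k by (rule measurable_component_singleton)
  have 3: "(\<lambda>\<omega>. fst (snd \<omega>) r k) \<in> measurable (init_measure m i eps) (density lborel (normal_density 0 (1 / sqrt m)))"
    using measurable_compose[OF 1 2] by simp
  then show ?thesis by (simp add: measurable_def)
qed

lemma comp_b[measurable]: "r \<in> {1..m} \<Longrightarrow> (\<lambda>\<omega>. snd (snd \<omega>) r) \<in> borel_measurable (init_measure m i eps)"
  unfolding init_measure_def by measurable

lemma H_meas:
  "(\<lambda>\<omega>. \<Sum>j=1..n. c j * netN m i (fst \<omega>) (fst (snd \<omega>)) (snd (snd \<omega>)) w b (y j)) \<in> borel_measurable (init_measure m i eps)"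
  unfolding netN_def by measurable

lemma rat_approx:
  fixes x \<delta> :: real
  assumes "\<delta> > 0"
  shows "\<exists>q\<in>\<rat>. \<bar>q\<bar> \<le> \<bar>x\<bar> \<and> \<bar>x - q\<bar> < \<delta>"
proof -
  have pos: "\<exists>q\<in>\<rat>. \<bar>q\<bar> \<le> \<bar>y\<bar> \<and> \<bar>y - q\<bar> < \<delta>" if yp: "y > 0" for y :: real
  proof -
    obtain q where q: "q \<in> \<rat>" "max 0 (y - \<delta>) < q" "q < y"
      using Rats_dense_in_real[of "max 0 (y - \<delta>)" y] yp assms by auto
    then show ?thesis by (intro bexI[of _ q]) auto
  qed
  show ?thesis
  proof (cases "x > 0")
    case True then show ?thesis using pos by blast
  next
    case False
    show ?thesis
    proof (cases "x = 0")
      case True then show ?thesis using assms by (intro bexI[of _ 0]) auto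
    next
      case False
      with \<open>\<not> x > 0\<close> have "-x > 0" by auto
      from pos[OF this] obtain q where "q \<in> \<rat>" "\<bar>q\<bar> \<le> \<bar>-x\<bar>" "\<bar>-x - q\<bar> < \<delta>" by blast
      then show ?thesis by (intro bexI[of _ "-q"]) auto
    qed
  qed
qed

lemma netN_pert:
  assumes w: "\<forall>r\<in>{1..m}. \<forall>k\<in>{1..i+1}. \<bar>w r k - w' r k\<bar> \<le> \<delta>" and b: "\<forall>r\<in>{1..m}. \<bar>b r - b' r\<bar> \<le> \<delta>"
  shows "\<bar>netN m i a wbar bbar w b y - netN m i a wbar bbar w' b' y\<bar>
     \<le> \<delta> * (\<Sum>r=1..m. \<bar>a r\<bar>) * ((\<Sum>k=1..i+1. \<bar>xhat i y k\<bar>) + 1)"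
proof -
  define P where "P w b r = (\<Sum>k=1..i+1. (wbar r k + w r k) * xhat i y k) + bbar r + b r" for w :: "nat \<Rightarrow> nat \<Rightarrow> real" and b :: "nat \<Rightarrow> real" and r
  have dP: "\<bar>P w b r - P w' b' r\<bar> \<le> \<delta> * ((\<Sum>k=1..i+1. \<bar>xhat i y k\<bar>) + 1)" if r: "r \<in> {1..m}" for r
  proof -
    have eqP: "P w b r - P w' b' r = (\<Sum>k=1..i+1. (w r k - w' r k) * xhat i y k) + (b r - b' r)"
      unfolding P_def by (simp add: sum_subtractf[symmetric] algebra_simps)
    have "\<bar>P w b r - P w' b' r\<bar> \<le> (\<Sum>k=1..i+1. \<bar>w r k - w' r k\<bar> * \<bar>xhat i y k\<bar>) + \<bar>b r - b' r\<bar>"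
    proof -
      have "\<bar>\<Sum>k=1..i+1. (w r k - w' r k) * xhat i y k\<bar> \<le> (\<Sum>k=1..i+1. \<bar>(w r k - w' r k) * xhat i y k\<bar>)"
        by (rule sum_abs)
      also have "\<dots> = (\<Sum>k=1..i+1. \<bar>w r k - w' r k\<bar> * \<bar>xhat i y k\<bar>)" by (simp only: abs_mult)
      finally have "\<bar>\<Sum>k=1..i+1. (w r k - w' r k) * xhat i y k\<bar> \<le> (\<Sum>k=1..i+1. \<bar>w r k - w' r k\<bar> * \<bar>xhat i y k\<bar>)" .
      with abs_triangle_ineq[of "\<Sum>k=1..i+1. (w r k - w' r k) * xhat i y k" "b r - b' r"]
      show ?thesis unfolding eqP by linarith
    qed
    also have "\<dots> \<le> (\<Sum>k=1..i+1. \<delta> * \<bar>xhat i y k\<bar>) + \<delta>"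
      using w b r by (intro add_mono sum_mono mult_right_mono) auto
    finally show ?thesis by (simp add: sum_distrib_left algebra_simps)
  qed
  have "netN m i a wbar bbar w b y - netN m i a wbar bbar w' b' y = (\<Sum>r=1..m. a r * (max 0 (P w b r) - max 0 (P w' b' r)))"
    unfolding netN_def P_def by (simp add: sum_subtractf[symmetric] algebra_simps)
  then have "\<bar>netN m i a wbar bbar w b y - netN m i a wbar bbar w' b' y\<bar> \<le> (\<Sum>r=1..m. \<bar>a r\<bar> * \<bar>max 0 (P w b r) - max 0 (P w' b' r)\<bar>)"
    by (metis (no_types, lifting) abs_mult sum.cong sum_abs)
  also have "\<dots> \<le> (\<Sum>r=1..m. \<bar>a r\<bar> * (\<delta> * ((\<Sum>k=1..i+1. \<bar>xhat i y k\<bar>) + 1)))"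
    by (intro sum_mono mult_left_mono order_trans[OF relu_lip dP]) auto
  also have "\<dots> = \<delta> * (\<Sum>r=1..m. \<bar>a r\<bar>) * ((\<Sum>k=1..i+1. \<bar>xhat i y k\<bar>) + 1)"
    by (simp only: sum_distrib_right[symmetric] sum_distrib_left[symmetric] mult_ac)
  finally show ?thesis .
qed

lemma H_bound:
  assumes yn: "\<forall>j\<in>{1..n}. (\<Sum>k=1..i+1. (xhat i (y j) k)\<^sup>2) = 1" and th: "\<theta> \<in> offsets m i B"
  shows "\<bar>\<Sum>j=1..n. c j * netN m i a wbar bbar (fst \<theta>) (snd \<theta>) (y j)\<bar>
     \<le> (\<Sum>j=1..n. \<bar>c j\<bar> * (\<Sum>r=1..m. \<bar>a r\<bar> * (\<bar>uu i wbar bbar r (y j)\<bar> + 2 * B)))"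
proof -
  have nb: "\<bar>netN m i a wbar bbar (fst \<theta>) (snd \<theta>) (y j)\<bar> \<le> (\<Sum>r=1..m. \<bar>a r\<bar> * (\<bar>uu i wbar bbar r (y j)\<bar> + 2 * B))"
    if j: "j \<in> {1..n}" for j
  proof -
    have "\<bar>netN m i a wbar bbar (fst \<theta>) (snd \<theta>) (y j)\<bar>
       \<le> (\<Sum>r=1..m. \<bar>a r * max 0 (uu i wbar bbar r (y j) + uu i (fst \<theta>) (snd \<theta>) r (y j))\<bar>)"
      unfolding netN_split by (rule sum_abs)
    also have "\<dots> \<le> (\<Sum>r=1..m. \<bar>a r\<bar> * (\<bar>uu i wbar bbar r (y j)\<bar> + 2 * B))"
    proof (rule sum_mono)
      fix r assume r: "r \<in> {1..m}"
      have u: "\<bar>uu i (fst \<theta>) (snd \<theta>) r (y j)\<bar> \<le> 2 * B"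
        using th r yn j by (intro uu_bound) auto
      have "\<bar>max 0 (uu i wbar bbar r (y j) + uu i (fst \<theta>) (snd \<theta>) r (y j))\<bar> \<le> \<bar>uu i wbar bbar r (y j)\<bar> + 2 * B"
        using u by (auto simp: max_def)
      then show "\<bar>a r * max 0 (uu i wbar bbar r (y j) + uu i (fst \<theta>) (snd \<theta>) r (y j))\<bar> \<le> \<bar>a r\<bar> * (\<bar>uu i wbar bbar r (y j)\<bar> + 2 * B)"
        by (simp add: abs_mult mult_left_mono)
    qed
    finally show ?thesis .
  qed
  have "\<bar>\<Sum>j=1..n. c j * netN m i a wbar bbar (fst \<theta>) (snd \<theta>) (y j)\<bar>
      \<le> (\<Sum>j=1..n. \<bar>c j * netN m i a wbar bbar (fst \<theta>) (snd \<theta>) (y j)\<bar>)" by (rule sum_abs)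
  also have "\<dots> \<le> (\<Sum>j=1..n. \<bar>c j\<bar> * (\<Sum>r=1..m. \<bar>a r\<bar> * (\<bar>uu i wbar bbar r (y j)\<bar> + 2 * B)))"
    using nb by (intro sum_mono) (simp add: abs_mult mult_left_mono)
  finally show ?thesis .
qed

lemma sup_countable:
  fixes c :: "nat \<Rightarrow> real" and y :: "nat \<Rightarrow> nat \<Rightarrow> real" and m i n :: nat
    and a bbar :: "nat \<Rightarrow> real" and wbar :: "nat \<Rightarrow> nat \<Rightarrow> real" and B :: real
  assumes B: "B > 0" and yn: "\<forall>j\<in>{1..n}. (\<Sum>k=1..i+1. (xhat i (y j) k)\<^sup>2) = 1"
  defines "H \<equiv> \<lambda>\<theta>. \<Sum>j=1..n. c j * netN m i a wbar bbar (fst \<theta>) (snd \<theta>) (y j)"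
    and "D \<equiv> offsets m i B \<inter> (PiE {1..m} (\<lambda>_. PiE {1..i+1} (\<lambda>_. \<rat>)) \<times> PiE {1..m} (\<lambda>_. \<rat>))"
  shows "Sup (H ` offsets m i B) = Sup (H ` D)" and "bdd_above (H ` offsets m i B)"
    and "bdd_above (H ` D)" and "D \<noteq> {}"
proof -
  define T where "T = offsets m i B"
  define KH where "KH = (\<Sum>j=1..n. \<bar>c j\<bar> * (\<Sum>r=1..m. \<bar>a r\<bar> * (\<bar>uu i wbar bbar r (y j)\<bar> + 2 * B)))"
  have bddT: "bdd_above (H ` T)"
  proof (rule bdd_aboveI2[where M=KH])
    fix \<theta> assume "\<theta> \<in> T"
    then have "\<bar>H \<theta>\<bar> \<le> KH" unfolding H_def KH_def T_def by (rule H_bound[OF yn])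
    then show "H \<theta> \<le> KH" by linarith
  qed
  have DT: "D \<subseteq> T" unfolding D_def T_def by auto
  have bddD: "bdd_above (H ` D)" using bddT DT by (meson bdd_above_mono image_mono)
  define \<theta>0 where "\<theta>0 = ((\<lambda>r\<in>{1..m}. \<lambda>k\<in>{1..i+1}. 0::real), (\<lambda>r\<in>{1..m}. 0::real))"
  have "\<theta>0 \<in> D" unfolding D_def \<theta>0_def offsets_def using B by auto
  then have Dne: "D \<noteq> {}" by auto
  have Tne: "T \<noteq> {}" using DT Dne by auto
  have approx: "\<exists>\<theta>'\<in>D. H \<theta> \<le> H \<theta>' + e" if th: "\<theta> \<in> T" and e: "e > 0" for \<theta> e
  proof -
    obtain w b where wb: "\<theta> = (w, b)" by fastforce
    define L where "L = (\<Sum>j=1..n. \<bar>c j\<bar> * ((\<Sum>r=1..m. \<bar>a r\<bar>) * ((\<Sum>k=1..i+1. \<bar>xhat i (y j) k\<bar>) + 1)))"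
    have L0: "L \<ge> 0" unfolding L_def by (intro sum_nonneg mult_nonneg_nonneg) (auto intro!: sum_nonneg add_nonneg_nonneg)
    define \<delta> where "\<delta> = e / (L + 1)"
    have \<delta>0: "\<delta> > 0" unfolding \<delta>_def using e L0 by auto
    define q where "q x = (SOME q. q \<in> \<rat> \<and> \<bar>q\<bar> \<le> \<bar>x\<bar> \<and> \<bar>x - q\<bar> < \<delta>)" for x :: real
    have qp: "q x \<in> \<rat> \<and> \<bar>q x\<bar> \<le> \<bar>x\<bar> \<and> \<bar>x - q x\<bar> < \<delta>" for x
    proof -
      have "\<exists>q. q \<in> \<rat> \<and> \<bar>q\<bar> \<le> \<bar>x\<bar> \<and> \<bar>x - q\<bar> < \<delta>" using rat_approx[OF \<delta>0, of x] by blast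
      then show ?thesis unfolding q_def by (rule someI_ex)
    qed
    define w' where "w' = (\<lambda>r\<in>{1..m}. \<lambda>k\<in>{1..i+1}. q (w r k))"
    define b' where "b' = (\<lambda>r\<in>{1..m}. q (b r))"
    have wB: "\<forall>r\<in>{1..m}. sqrt (\<Sum>k=1..i+1. (w r k)\<^sup>2) \<le> B \<and> \<bar>b r\<bar> \<le> B"
      using th unfolding wb T_def offsets_def by blast
    have "(w', b') \<in> offsets m i B" unfolding offsets_def
    proof (clarify, intro conjI)
      fix r assume r: "r \<in> {1..m}"
      have "(\<Sum>k=1..i+1. (w' r k)\<^sup>2) \<le> (\<Sum>k=1..i+1. (w r k)\<^sup>2)"
        using r qp by (intro sum_mono) (auto simp: w'_def abs_le_square_iff)
      then have "sqrt (\<Sum>k=1..i+1. (w' r k)\<^sup>2) \<le> sqrt (\<Sum>k=1..i+1. (w r k)\<^sup>2)" by (rule real_sqrt_le_mono)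
      moreover have "sqrt (\<Sum>k=1..i+1. (w r k)\<^sup>2) \<le> B" using wB r by blast
      ultimately show "sqrt (\<Sum>k=1..i+1. (w' r k)\<^sup>2) \<le> B" by linarith
      have "\<bar>b' r\<bar> \<le> \<bar>b r\<bar>" using r qp by (auto simp: b'_def)
      moreover have "\<bar>b r\<bar> \<le> B" using wB r by blast
      ultimately show "\<bar>b' r\<bar> \<le> B" by linarith
    qed
    moreover have "(w', b') \<in> PiE {1..m} (\<lambda>_. PiE {1..i+1} (\<lambda>_. \<rat>)) \<times> PiE {1..m} (\<lambda>_. \<rat>)"
      using qp by (auto simp: w'_def b'_def)
    ultimately have inD: "(w', b') \<in> D" unfolding D_def by auto
    have dw: "\<forall>r\<in>{1..m}. \<forall>k\<in>{1..i+1}. \<bar>w r k - w' r k\<bar> \<le> \<delta>"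
      using qp by (auto simp: w'_def less_imp_le)
    have db: "\<forall>r\<in>{1..m}. \<bar>b r - b' r\<bar> \<le> \<delta>"
      using qp by (auto simp: b'_def less_imp_le)
    have "H \<theta> - H (w', b') = (\<Sum>j=1..n. c j * (netN m i a wbar bbar w b (y j) - netN m i a wbar bbar w' b' (y j)))"
      unfolding H_def wb by (simp add: sum_subtractf[symmetric] algebra_simps)
    also have "\<dots> \<le> (\<Sum>j=1..n. \<bar>c j * (netN m i a wbar bbar w b (y j) - netN m i a wbar bbar w' b' (y j))\<bar>)"
      by (intro sum_mono) auto
    also have "\<dots> \<le> (\<Sum>j=1..n. \<bar>c j\<bar> * (\<delta> * (\<Sum>r=1..m. \<bar>a r\<bar>) * ((\<Sum>k=1..i+1. \<bar>xhat i (y j) k\<bar>) + 1)))"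
      unfolding abs_mult by (intro sum_mono mult_left_mono netN_pert[OF dw db]) auto
    also have "\<dots> = (\<Sum>j=1..n. \<delta> * (\<bar>c j\<bar> * ((\<Sum>r=1..m. \<bar>a r\<bar>) * ((\<Sum>k=1..i+1. \<bar>xhat i (y j) k\<bar>) + 1))))"
      by (intro sum.cong refl) (simp only: mult_ac)
    also have "\<dots> = \<delta> * L" unfolding L_def by (rule sum_distrib_left[symmetric])
    also have "\<dots> \<le> e"
    proof -
      have "\<delta> * L = e * (L / (L + 1))" unfolding \<delta>_def by simp
      also have "\<dots> \<le> e * 1" using e L0 by (intro mult_left_mono) auto
      finally show ?thesis by simp
    qed
    finally show ?thesis using inD by (intro bexI[of _ "(w', b')"]) auto
  qed
  have "Sup (H ` T) \<le> Sup (H ` D)"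
  proof (rule cSUP_least[OF Tne])
    fix \<theta> assume th: "\<theta> \<in> T"
    show "H \<theta> \<le> Sup (H ` D)"
    proof (rule field_le_epsilon)
      fix e :: real assume e: "e > 0"
      obtain \<theta>' where "\<theta>' \<in> D" "H \<theta> \<le> H \<theta>' + e" using approx[OF th e] by blast
      moreover have "H \<theta>' \<le> Sup (H ` D)" using bddD \<open>\<theta>' \<in> D\<close> by (intro cSUP_upper)
      ultimately show "H \<theta> \<le> Sup (H ` D) + e" by linarith
    qed
  qed
  moreover have "Sup (H ` D) \<le> Sup (H ` T)"
    by (rule cSUP_subset_mono[OF Dne bddT DT order_refl])
  ultimately show "Sup (H ` offsets m i B) = Sup (H ` D)" unfolding T_def by linarith
  show "bdd_above (H ` offsets m i B)" using bddT unfolding T_def .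
  show "bdd_above (H ` D)" by (rule bddD)
  show "D \<noteq> {}" by (rule Dne)
qed



lemma rad_meas:
  assumes B: "B > 0" and xn: "\<forall>j\<in>{1..n}. (\<Sum>k=1..i+1. (xhat i (x j) k)\<^sup>2) = 1"
  shows "(\<lambda>\<omega>. rademacher m i n x B (fst \<omega>) (fst (snd \<omega>)) (snd (snd \<omega>))) \<in> borel_measurable (init_measure m i eps)"
proof -
  define D where "D = offsets m i B \<inter> (PiE {1..m} (\<lambda>_. PiE {1..i+1} (\<lambda>_. \<rat>)) \<times> PiE {1..m} (\<lambda>_. \<rat>))"
  have cD: "countable D" unfolding D_def
    by (rule countable_subset[OF Int_lower2]) (intro countable_SIGMA countable_PiE countable_rat finite_atLeastAtMost)
  have SM: "(\<lambda>\<omega>. Sup ((\<lambda>\<theta>. \<Sum>j=1..n. \<xi> j * netN m i (fst \<omega>) (fst (snd \<omega>)) (snd (snd \<omega>)) (fst \<theta>) (snd \<theta>) (x j)) ` offsets m i B))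
      \<in> borel_measurable (init_measure m i eps)" for \<xi> :: "nat \<Rightarrow> real"
  proof -
    have eq: "(\<lambda>\<omega>. Sup ((\<lambda>\<theta>. \<Sum>j=1..n. \<xi> j * netN m i (fst \<omega>) (fst (snd \<omega>)) (snd (snd \<omega>)) (fst \<theta>) (snd \<theta>) (x j)) ` offsets m i B))
      = (\<lambda>\<omega>. SUP \<theta>\<in>D. (\<Sum>j=1..n. \<xi> j * netN m i (fst \<omega>) (fst (snd \<omega>)) (snd (snd \<omega>)) (fst \<theta>) (snd \<theta>) (x j)))"
      unfolding D_def by (rule ext) (rule sup_countable(1)[OF B xn])
    have "(\<lambda>\<omega>. SUP \<theta>\<in>D. (\<Sum>j=1..n. \<xi> j * netN m i (fst \<omega>) (fst (snd \<omega>)) (snd (snd \<omega>)) (fst \<theta>) (snd \<theta>) (x j)))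
       \<in> borel_measurable (init_measure m i eps)"
    proof (rule borel_measurable_cSUP[OF cD])
      fix \<theta> show "(\<lambda>\<omega>. \<Sum>j=1..n. \<xi> j * netN m i (fst \<omega>) (fst (snd \<omega>)) (snd (snd \<omega>)) (fst \<theta>) (snd \<theta>) (x j)) \<in> borel_measurable (init_measure m i eps)"
        by (rule H_meas)
    next
      fix \<omega> show "bdd_above ((\<lambda>\<theta>. \<Sum>j=1..n. \<xi> j * netN m i (fst \<omega>) (fst (snd \<omega>)) (snd (snd \<omega>)) (fst \<theta>) (snd \<theta>) (x j)) ` D)"
        unfolding D_def by (rule sup_countable(3)[OF B xn])
    qed
    then show ?thesis unfolding eq .
  qed
  show ?thesis unfolding rademacher_def case_prod_beta
    by (intro borel_measurable_times borel_measurable_divide borel_measurable_sum SM borel_measurable_const)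
qed

theorem lemma18:
  fixes m d i n t :: nat and eps c1 B :: real and x :: "nat \<Rightarrow> nat \<Rightarrow> real"
  assumes "m \<ge> 2" and "eps > 0" and "c1 > 10"
    and "1 \<le> i" and "i \<le> d"
    and "\<forall>j\<in>{1..n}. sqrt (\<Sum>k=1..d. (x j k)\<^sup>2) \<le> 1"
    and "B > 0" and "n \<ge> 1" and "t \<ge> 1"
  shows "measure (init_measure m i eps)
           {\<omega> \<in> space (init_measure m i eps).
              rademacher m i n x B (fst \<omega>) (fst (snd \<omega>)) (snd (snd \<omega>))
                \<le> 8 * c1 * eps * B * real m * sqrt (2 * ln (real m)) / sqrt (real n)}
         \<ge> 1 - 1 / c1"
proof -
  note m = assms(1) and eps = assms(2) and c1 = assms(3) and B = assms(7) and n = assms(8)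
  define M where "M = init_measure m i eps"
  define K where "K = 8 * c1 * eps * B * real m * sqrt (2 * ln (real m)) / sqrt (real n)"
  define K' where "K' = 4 * c1 * eps * real m * sqrt (2 * ln (real m))"
  define f where "f = (\<lambda>\<omega>::(nat \<Rightarrow> real) \<times> (nat \<Rightarrow> nat \<Rightarrow> real) \<times> (nat \<Rightarrow> real). rademacher m i n x B (fst \<omega>) (fst (snd \<omega>)) (snd (snd \<omega>)))"
  have xn: "\<forall>j\<in>{1..n}. (\<Sum>k=1..i+1. (xhat i (x j) k)\<^sup>2) = 1"
    using assms(5,6) xhat_norm by blast
  have fm: "f \<in> borel_measurable M" unfolding f_def M_def by (rule rad_meas[OF B xn])
  have Em: "{\<omega> \<in> space M. f \<omega> \<le> K} \<in> sets M" using fm by measurable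
  have ln2: "ln (real m) \<ge> 1 / 2"
  proof -
    have "ln (1 / real m) \<le> 1 / real m - 1" using m by (intro ln_le_minus_one) auto
    then have "ln (real m) \<ge> 1 - 1 / real m" using m by (simp add: ln_div)
    moreover have "1 / real m \<le> 1 / 2" using m by (simp add: divide_le_eq)
    ultimately show ?thesis by linarith
  qed
  have sq1: "sqrt (2 * ln (real m)) \<ge> 1" using ln2 by simp
  have K'pos: "K' > 0" unfolding K'_def using c1 eps m sq1 by (intro mult_pos_pos) auto
  have sub: "{\<omega> \<in> space M. (\<Sum>r=1..m. \<bar>fst \<omega> r\<bar>) \<le> K'} \<subseteq> {\<omega> \<in> space M. f \<omega> \<le> K}"
  proof clarify
    fix \<omega> assume w: "\<omega> \<in> space M" and A: "(\<Sum>r=1..m. \<bar>fst \<omega> r\<bar>) \<le> K'"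
    have "f \<omega> \<le> 2 * B * (\<Sum>r=1..m. \<bar>fst \<omega> r\<bar>) / sqrt n"
      unfolding f_def by (rule det_bound[OF B n xn])
    also have "\<dots> \<le> 2 * B * K' / sqrt n"
      using A B n by (intro divide_right_mono mult_left_mono) auto
    also have "\<dots> = K" unfolding K_def K'_def by (simp add: field_simps)
    finally show "f \<omega> \<le> K" .
  qed
  have pM: "prob_space M" unfolding M_def init_measure_def
    using eps m by (intro prob_space_pair prob_space_PiM prob_space_normal_density) auto
  have "measure M {\<omega> \<in> space M. (\<Sum>r=1..m. \<bar>fst \<omega> r\<bar>) \<le> K'} \<le> measure M {\<omega> \<in> space M. f \<omega> \<le> K}"
    using pM Em sub by (intro finite_measure.finite_measure_mono prob_space.axioms(1))
  moreover have "measure M {\<omega> \<in> space M. (\<Sum>r=1..m. \<bar>fst \<omega> r\<bar>) \<le> K'} \<ge> 1 - real m * eps / K'"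
    unfolding M_def using markov_part[OF eps K'pos] m by simp
  moreover have "real m * eps / K' \<le> 1 / c1"
  proof -
    have "real m * eps / K' = 1 / (4 * c1 * sqrt (2 * ln (real m)))"
      unfolding K'_def using m eps by (simp add: field_simps)
    also have "\<dots> \<le> 1 / c1"
    proof (rule divide_left_mono)
      show "c1 \<le> 4 * c1 * sqrt (2 * ln (real m))" proof -
        have q: "1 \<le> 4 * sqrt (2 * ln (real m))" using sq1 by linarith
        have "c1 * 1 \<le> c1 * (4 * sqrt (2 * ln (real m)))" using c1 by (intro mult_left_mono[OF q]) auto
        then show ?thesis by (simp add: mult_ac)
      qed
      show "0 < 4 * c1 * sqrt (2 * ln (real m)) * c1" using c1 sq1 by (intro mult_pos_pos) auto
    qed simp
    finally show ?thesis .
  qed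
  ultimately show ?thesis unfolding M_def K_def f_def by linarith
qed

end
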